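(* If $A\subseteq\omega$ is c.e. and has density $1$ effectively, then $A$ has a computable subset $B$ which has density $1$ effectively.
   Context: For $S\subseteq\omega$ and $n>0$, $\rho_n(S)=|S\cap[0,n)|/n$. For a set $A$ of density $1$ (i.e. $\lim_n\rho_n(A)=1$), a function $w:\omega\to\omega$ witnesses that $A$ has density $1$ if for all $k$ and all $n\ge w(k)$, $\rho_n(A)\ge 1-2^{-k}$. The set $A$ has density $1$ effectively if there is a computable function which witnesses that $A$ has density $1$. *)

theory Defs
  imports Complex_Main
begin

text \<open>A function of arity n is a HOL function on nat lists; only its values on
lists of length n are meaningful.\<close>

definition comp_fn :: "(nat list \<Rightarrow> nat) \<Rightarrow> (nat list \<Rightarrow> nat) list \<Rightarrow> nat list \<Rightarrow> nat" where
  "comp_fn f gs = (\<lambda>xs. f (map (\<lambda>g. g xs) gs))"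

definition prec_fn :: "(nat list \<Rightarrow> nat) \<Rightarrow> (nat list \<Rightarrow> nat) \<Rightarrow> nat list \<Rightarrow> nat" where
  "prec_fn g h = (\<lambda>xs. rec_nat (g (tl xs)) (\<lambda>k r. h (r # k # tl xs)) (hd xs))"

definition mu_fn :: "(nat list \<Rightarrow> nat) \<Rightarrow> nat list \<Rightarrow> nat" where
  "mu_fn f = (\<lambda>xs. LEAST y. f (y # xs) = 0)"

inductive recfn :: "nat \<Rightarrow> (nat list \<Rightarrow> nat) \<Rightarrow> bool" where
  rf_zero: "recfn n (\<lambda>_. 0)"
| rf_suc: "recfn 1 (\<lambda>xs. Suc (hd xs))"
| rf_proj: "i < n \<Longrightarrow> recfn n (\<lambda>xs. xs ! i)"
| rf_comp: "recfn (length gs) f \<Longrightarrow> (\<forall>g \<in> set gs. recfn n g) \<Longrightarrow> recfn n (comp_fn f gs)"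
| rf_prec: "recfn n g \<Longrightarrow> recfn (Suc (Suc n)) h \<Longrightarrow> recfn (Suc n) (prec_fn g h)"
| rf_mu: "recfn (Suc n) f \<Longrightarrow> (\<forall>xs. length xs = n \<longrightarrow> (\<exists>y. f (y # xs) = 0))
           \<Longrightarrow> recfn n (mu_fn f)"

definition computable_fun :: "(nat \<Rightarrow> nat) \<Rightarrow> bool" where
  "computable_fun w \<longleftrightarrow> (\<exists>f. recfn 1 f \<and> (\<forall>k. w k = f [k]))"

definition computable_set :: "nat set \<Rightarrow> bool" where
  "computable_set S \<longleftrightarrow> (\<exists>f. recfn 1 f \<and> (\<forall>x. x \<in> S \<longleftrightarrow> f [x] = 0))"

definition ce_set :: "nat set \<Rightarrow> bool" where
  "ce_set S \<longleftrightarrow> (\<exists>f. recfn 2 f \<and> (\<forall>x. x \<in> S \<longleftrightarrow> (\<exists>y. f [y, x] = 0)))"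

definition rho :: "nat \<Rightarrow> nat set \<Rightarrow> real" where
  "rho n S = real (card (S \<inter> {0..<n})) / real n"

definition has_density_one :: "nat set \<Rightarrow> bool" where
  "has_density_one A \<longleftrightarrow> (\<lambda>n. rho n A) \<longlonglongrightarrow> 1"

definition density_one_witness :: "(nat \<Rightarrow> nat) \<Rightarrow> nat set \<Rightarrow> bool" where
  "density_one_witness w A \<longleftrightarrow>
     (\<forall>k n. 0 < n \<longrightarrow> w k \<le> n \<longrightarrow> rho n A \<ge> 1 - 1 / 2 ^ k)"

definition density_one_effectively :: "nat set \<Rightarrow> bool" where
  "density_one_effectively A \<longleftrightarrow>
     has_density_one A \<and> (\<exists>w. computable_fun w \<and> density_one_witness w A)"

end

theory Submission
  imports Defs
begin

definition rc :: "nat \<Rightarrow> (nat list \<Rightarrow> nat) \<Rightarrow> bool" where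
  "rc n F \<longleftrightarrow> (\<exists>f. recfn n f \<and> (\<forall>xs. length xs = n \<longrightarrow> f xs = F xs))"

lemma rc_cong: "rc n F \<Longrightarrow> (\<And>xs. length xs = n \<Longrightarrow> F xs = G xs) \<Longrightarrow> rc n G"
  unfolding rc_def by metis

lemma recfn_rc: "recfn n f \<Longrightarrow> rc n f" unfolding rc_def by blast

lemma rc_zero: "rc n (\<lambda>_. 0)" by (rule recfn_rc) (rule rf_zero)
lemma rc_proj: "i < n \<Longrightarrow> rc n (\<lambda>xs. xs ! i)" by (rule recfn_rc) (rule rf_proj)

lemma rc_list: "(\<forall>G\<in>set Gs. rc n G) \<Longrightarrow> \<exists>gs. length gs = length Gs \<and> (\<forall>g\<in>set gs. recfn n g)
   \<and> (\<forall>xs. length xs = n \<longrightarrow> map (\<lambda>g. g xs) gs = map (\<lambda>G. G xs) Gs)"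
proof (induction Gs)
  case Nil then show ?case by simp
next
  case (Cons G Gs)
  then obtain gs where gs: "length gs = length Gs" "\<forall>g\<in>set gs. recfn n g"
     "\<forall>xs. length xs = n \<longrightarrow> map (\<lambda>g. g xs) gs = map (\<lambda>G. G xs) Gs" by auto
  from Cons.prems obtain g where g: "recfn n g" "\<forall>xs. length xs = n \<longrightarrow> g xs = G xs"
    unfolding rc_def by auto
  show ?case by (rule exI[of _ "g # gs"]) (use gs g in auto)
qed

lemma rc_comp: assumes "rc (length Gs) F" "\<forall>G\<in>set Gs. rc n G"
  shows "rc n (\<lambda>xs. F (map (\<lambda>G. G xs) Gs))"
proof -
  obtain f where f: "recfn (length Gs) f" "\<forall>ys. length ys = length Gs \<longrightarrow> f ys = F ys"
    using assms(1) unfolding rc_def by auto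
  obtain gs where gs: "length gs = length Gs" "\<forall>g\<in>set gs. recfn n g"
    "\<forall>xs. length xs = n \<longrightarrow> map (\<lambda>g. g xs) gs = map (\<lambda>G. G xs) Gs"
    using rc_list[OF assms(2)] by auto
  have "recfn n (comp_fn f gs)" using rf_comp[of gs f n] f(1) gs(1,2) by simp
  moreover have "\<forall>xs. length xs = n \<longrightarrow> comp_fn f gs xs = F (map (\<lambda>G. G xs) Gs)"
    using f(2) gs(3) by (simp add: comp_fn_def)
  ultimately show ?thesis unfolding rc_def by blast
qed

lemma rc_c1: "rc 1 P \<Longrightarrow> rc n G \<Longrightarrow> rc n (\<lambda>xs. P [G xs])"
  using rc_comp[of "[G]" P n] by simp
lemma rc_c2: "rc 2 P \<Longrightarrow> rc n G1 \<Longrightarrow> rc n G2 \<Longrightarrow> rc n (\<lambda>xs. P [G1 xs, G2 xs])"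
  using rc_comp[of "[G1,G2]" P n] by (simp add: numeral_2_eq_2)
lemma rc_c3: "rc 3 P \<Longrightarrow> rc n G1 \<Longrightarrow> rc n G2 \<Longrightarrow> rc n G3 \<Longrightarrow> rc n (\<lambda>xs. P [G1 xs, G2 xs, G3 xs])"
  using rc_comp[of "[G1,G2,G3]" P n] by (simp add: numeral_3_eq_3)

lemma rc_suc: "rc n G \<Longrightarrow> rc n (\<lambda>xs. Suc (G xs))"
  using rc_c1[OF recfn_rc[OF rf_suc], of n G] by simp

lemma rc_const: "rc n (\<lambda>_. c)"
  by (induction c) (auto intro: rc_zero rc_suc[where G="\<lambda>_. _"])

lemma rc_prec: assumes "rc n G" "rc (Suc (Suc n)) H"
  shows "rc (Suc n) (\<lambda>xs. rec_nat (G (tl xs)) (\<lambda>k r. H (r # k # tl xs)) (hd xs))"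
proof -
  obtain g where g: "recfn n g" "\<forall>xs. length xs = n \<longrightarrow> g xs = G xs"
    using assms(1) unfolding rc_def by auto
  obtain h where h: "recfn (Suc (Suc n)) h" "\<forall>xs. length xs = Suc (Suc n) \<longrightarrow> h xs = H xs"
    using assms(2) unfolding rc_def by auto
  have "recfn (Suc n) (prec_fn g h)" by (rule rf_prec[OF g(1) h(1)])
  moreover have "\<forall>xs. length xs = Suc n \<longrightarrow> prec_fn g h xs = rec_nat (G (tl xs)) (\<lambda>k r. H (r # k # tl xs)) (hd xs)"
  proof (intro allI impI)
    fix xs :: "nat list" assume l: "length xs = Suc n"
    have e1: "g (tl xs) = G (tl xs)" using g(2) l by simp
    have e2: "\<And>k r. h (r # k # tl xs) = H (r # k # tl xs)" using h(2) l by simp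
    show "prec_fn g h xs = rec_nat (G (tl xs)) (\<lambda>k r. H (r # k # tl xs)) (hd xs)"
      by (simp add: prec_fn_def e1 e2)
  qed
  ultimately show ?thesis unfolding rc_def by blast
qed

lemma rc_mu: assumes "rc (Suc n) F" "\<forall>xs. length xs = n \<longrightarrow> (\<exists>y. F (y # xs) = 0)"
  shows "rc n (\<lambda>xs. LEAST y. F (y # xs) = 0)"
proof -
  obtain f where f: "recfn (Suc n) f" "\<forall>xs. length xs = Suc n \<longrightarrow> f xs = F xs"
    using assms(1) unfolding rc_def by auto
  have "recfn n (mu_fn f)" using f assms(2) by (intro rf_mu) auto
  moreover have "\<forall>xs. length xs = n \<longrightarrow> mu_fn f xs = (LEAST y. F (y # xs) = 0)"
    using f(2) by (simp add: mu_fn_def)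
  ultimately show ?thesis unfolding rc_def by blast
qed

lemma map_tl: "length ys = Suc m \<Longrightarrow> map (\<lambda>i. ys ! Suc i) [0..<m] = tl ys"
  by (rule nth_equalityI) (auto simp: nth_tl)

lemma rc_tl: "rc n F \<Longrightarrow> rc (Suc n) (\<lambda>ys. F (tl ys))"
proof -
  assume F: "rc n F"
  have "rc (Suc n) (\<lambda>ys. F (map (\<lambda>G. G ys) (map (\<lambda>i ys. ys ! Suc i) [0..<n])))"
    by (rule rc_comp) (use F in \<open>auto intro: rc_proj\<close>)
  then show ?thesis by (rule rc_cong) (simp add: map_tl comp_def)
qed

lemma len1: "length xs = 1 \<Longrightarrow> \<exists>a. xs = [a]"
  by (metis One_nat_def length_0_conv length_Suc_conv)
lemma len1': "length xs = Suc 0 \<Longrightarrow> \<exists>a. xs = [a]"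
  by (metis length_0_conv length_Suc_conv)
lemma len2: "length xs = 2 \<Longrightarrow> \<exists>a b. xs = [a,b]"
  by (metis length_0_conv length_Suc_conv numeral_2_eq_2)
lemma len3: "length xs = 3 \<Longrightarrow> \<exists>a b c. xs = [a,b,c]"
  by (metis length_0_conv length_Suc_conv numeral_3_eq_3)

lemma rec_add: "rec_nat b (\<lambda>k r. Suc r) a = a + (b::nat)" by (induction a) auto
lemma rec_mult: "rec_nat 0 (\<lambda>k r. r + b) a = a * (b::nat)" by (induction a) auto
lemma rec_pred: "rec_nat 0 (\<lambda>k r. k) a = a - (1::nat)" by (cases a) auto
lemma rec_sub: "rec_nat b (\<lambda>k r. r - 1) a = b - (a::nat)" by (induction a) auto
lemma rec_pow: "rec_nat 1 (\<lambda>k r. r * 2) a = (2::nat) ^ a" by (induction a) auto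
lemma rec_sub': "rec_nat b (\<lambda>k r. r - Suc 0) a = b - (a::nat)" by (induction a) auto
lemma rec_pow': "rec_nat (Suc 0) (\<lambda>k r. r * 2) a = (2::nat) ^ a" by (induction a) auto
lemma rec_sum: "rec_nat 0 (\<lambda>k r. r + g k) m = (\<Sum>z<m. g z)" by (induction m) auto

lemma rc_addP: "rc 2 (\<lambda>ys. ys ! 0 + ys ! 1)"
proof -
  have "rc (Suc 1) (\<lambda>xs. rec_nat ((\<lambda>ys. ys ! 0) (tl xs)) (\<lambda>k r. (\<lambda>ys. Suc (ys ! 0)) (r # k # tl xs)) (hd xs))"
    by (rule rc_prec) (auto intro: rc_proj rc_suc)
  then have "rc 2 (\<lambda>xs. rec_nat (tl xs ! 0) (\<lambda>k r. Suc ((r # k # tl xs) ! 0)) (hd xs))"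
    by (simp add: numeral_2_eq_2)
  then show ?thesis by (rule rc_cong) (auto dest!: len2 simp: rec_add)
qed

lemma rc_add: "rc n G1 \<Longrightarrow> rc n G2 \<Longrightarrow> rc n (\<lambda>xs. G1 xs + G2 xs)"
  using rc_c2[OF rc_addP, of n G1 G2] by simp

lemma rc_multP: "rc 2 (\<lambda>ys. ys ! 0 * ys ! 1)"
proof -
  have H: "rc (Suc (Suc 1)) (\<lambda>ys. ys ! 0 + ys ! 2)"
    using rc_add[OF rc_proj rc_proj, of 0 "Suc (Suc 1)" 2] by simp
  have "rc (Suc 1) (\<lambda>xs. rec_nat ((\<lambda>ys. 0) (tl xs)) (\<lambda>k r. (\<lambda>ys. ys ! 0 + ys ! 2) (r # k # tl xs)) (hd xs))"
    by (rule rc_prec[OF rc_zero H])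
  then have "rc 2 (\<lambda>xs. rec_nat 0 (\<lambda>k r. r + tl xs ! 0) (hd xs))"
    by (simp add: numeral_2_eq_2)
  then show ?thesis by (rule rc_cong) (auto dest!: len2 simp: rec_mult)
qed

lemma rc_mult: "rc n G1 \<Longrightarrow> rc n G2 \<Longrightarrow> rc n (\<lambda>xs. G1 xs * G2 xs)"
  using rc_c2[OF rc_multP, of n G1 G2] by simp

lemma rc_predP: "rc 1 (\<lambda>ys. ys ! 0 - 1)"
proof -
  have "rc (Suc 0) (\<lambda>xs. rec_nat ((\<lambda>ys. 0) (tl xs)) (\<lambda>k r. (\<lambda>ys. ys ! 1) (r # k # tl xs)) (hd xs))"
    by (rule rc_prec[OF rc_zero rc_proj]) simp
  then have "rc 1 (\<lambda>xs. rec_nat 0 (\<lambda>k r. k) (hd xs))" by simp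
  then show ?thesis by (rule rc_cong) (auto dest!: len1' simp: rec_pred)
qed

lemma rc_subP: "rc 2 (\<lambda>ys. ys ! 1 - ys ! 0)"
proof -
  have H: "rc (Suc (Suc 1)) (\<lambda>ys. ys ! 0 - 1)"
    using rc_c1[OF rc_predP rc_proj, of 0 "Suc (Suc 1)"] by simp
  have "rc (Suc 1) (\<lambda>xs. rec_nat ((\<lambda>ys. ys ! 0) (tl xs)) (\<lambda>k r. (\<lambda>ys. ys ! 0 - 1) (r # k # tl xs)) (hd xs))"
    by (rule rc_prec[OF rc_proj H]) simp
  then have "rc 2 (\<lambda>xs. rec_nat (tl xs ! 0) (\<lambda>k r. r - 1) (hd xs))"
    by (simp add: numeral_2_eq_2)
  then show ?thesis by (rule rc_cong) (auto dest!: len2 simp: rec_sub')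
qed

lemma rc_sub: "rc n G1 \<Longrightarrow> rc n G2 \<Longrightarrow> rc n (\<lambda>xs. G1 xs - G2 xs)"
  using rc_c2[OF rc_subP, of n G2 G1] by simp

lemma rc_powP: "rc 1 (\<lambda>ys. 2 ^ (ys ! 0))"
proof -
  have H: "rc (Suc (Suc 0)) (\<lambda>ys. ys ! 0 * 2)"
    using rc_mult[OF rc_proj rc_const, of 0 "Suc (Suc 0)" 2] by simp
  have "rc (Suc 0) (\<lambda>xs. rec_nat ((\<lambda>ys. 1) (tl xs)) (\<lambda>k r. (\<lambda>ys. ys ! 0 * 2) (r # k # tl xs)) (hd xs))"
    by (rule rc_prec[OF rc_const H])
  then have "rc 1 (\<lambda>xs. rec_nat 1 (\<lambda>k r. r * 2) (hd xs))" by simp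
  then show ?thesis by (rule rc_cong) (auto dest!: len1' simp: rec_pow')
qed

lemma rc_pow: "rc n G \<Longrightarrow> rc n (\<lambda>xs. 2 ^ G xs)"
  using rc_c1[OF rc_powP, of n G] by simp

lemma rc_sum: "rc (Suc n) F \<Longrightarrow> rc (Suc n) (\<lambda>xs. \<Sum>z<hd xs. F (z # tl xs))"
proof -
  assume F: "rc (Suc n) F"
  have H: "rc (Suc (Suc n)) (\<lambda>ys. ys ! 0 + F (tl ys))"
    by (rule rc_add[OF rc_proj rc_tl[OF F]]) simp
  have "rc (Suc n) (\<lambda>xs. rec_nat ((\<lambda>_. 0) (tl xs)) (\<lambda>k r. (\<lambda>ys. ys ! 0 + F (tl ys)) (r # k # tl xs)) (hd xs))"
    by (rule rc_prec[OF rc_zero H])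
  then show ?thesis by (rule rc_cong) (simp add: rec_sum)
qed

lemma p20: "rc 2 (\<lambda>xs. xs ! 0)" by (rule rc_proj) simp
lemma p21: "rc 2 (\<lambda>xs. xs ! 1)" by (rule rc_proj) simp
lemma p30: "rc 3 (\<lambda>xs. xs ! 0)" by (rule rc_proj) simp
lemma p31: "rc 3 (\<lambda>xs. xs ! 1)" by (rule rc_proj) simp
lemma p32: "rc 3 (\<lambda>xs. xs ! 2)" by (rule rc_proj) simp
lemma p10: "rc 1 (\<lambda>xs. xs ! 0)" by (rule rc_proj) simp

lemma rc_sum2: "rc 2 F \<Longrightarrow> rc 2 (\<lambda>xs. \<Sum>z<hd xs. F (z # tl xs))"
  using rc_sum[of "Suc 0" F] by (simp add: numeral_2_eq_2)
lemma rc_sum3: "rc 3 F \<Longrightarrow> rc 3 (\<lambda>xs. \<Sum>z<hd xs. F (z # tl xs))"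
  using rc_sum[of "Suc (Suc 0)" F] by (simp add: numeral_3_eq_3)

definition D :: "(nat list \<Rightarrow> nat) \<Rightarrow> nat \<Rightarrow> nat \<Rightarrow> nat" where
  "D f t z = (\<Sum>y<t. 1 - f [y, z])"
definition inA :: "(nat list \<Rightarrow> nat) \<Rightarrow> nat \<Rightarrow> nat \<Rightarrow> nat" where
  "inA f s z = 1 - (1 - D f (Suc s) z)"
definition cnt :: "(nat list \<Rightarrow> nat) \<Rightarrow> nat \<Rightarrow> nat \<Rightarrow> nat" where
  "cnt f s m = (\<Sum>z<m. inA f s z)"
definition viol :: "(nat list \<Rightarrow> nat) \<Rightarrow> (nat \<Rightarrow> nat) \<Rightarrow> nat \<Rightarrow> nat \<Rightarrow> nat \<Rightarrow> nat" where
  "viol f w s m k = (1 - (w k - m)) * (1 - (1 - (2^k * (m - cnt f s m) - m)))"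
definition gfun :: "(nat list \<Rightarrow> nat) \<Rightarrow> (nat \<Rightarrow> nat) \<Rightarrow> nat \<Rightarrow> nat \<Rightarrow> nat" where
  "gfun f w s x = (\<Sum>m<Suc x * 2^x. \<Sum>k<Suc x. viol f w s m k)"
definition sig :: "(nat list \<Rightarrow> nat) \<Rightarrow> (nat \<Rightarrow> nat) \<Rightarrow> nat \<Rightarrow> nat" where
  "sig f w x = (LEAST s. gfun f w s x = 0)"

lemma rc_inA: assumes hf: "rc 2 f"
  shows "rc 2 (\<lambda>xs. inA f (xs ! 0) (xs ! 1))"
proof -
  have R1: "rc 2 (\<lambda>xs. D f (xs ! 0) (xs ! 1))"
  proof -
    have "rc 2 (\<lambda>xs. 1 - f [xs ! 0, xs ! 1])"
      by (rule rc_sub[OF rc_const rc_c2[OF hf rc_proj rc_proj]]) auto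
    from rc_sum2[OF this] show ?thesis
      by (rule rc_cong) (auto dest!: len2 simp: D_def)
  qed
  show ?thesis
    unfolding inA_def
    by (rule rc_sub[OF rc_const rc_sub[OF rc_const rc_c2[OF R1 rc_suc[OF rc_proj] rc_proj]], simplified]) auto
qed

lemma rc_gfun: assumes hf: "rc 2 f" and hw: "rc 1 (\<lambda>xs. w (xs ! 0))"
  shows "rc 2 (\<lambda>xs. gfun f w (xs ! 0) (xs ! 1))"
proof -
  have R1: "rc 2 (\<lambda>xs. D f (xs ! 0) (xs ! 1))"
  proof -
    have "rc 2 (\<lambda>xs. 1 - f [xs ! 0, xs ! 1])"
      by (rule rc_sub[OF rc_const rc_c2[OF hf rc_proj rc_proj]]) auto
    from rc_sum2[OF this] show ?thesis
      by (rule rc_cong) (auto dest!: len2 simp: D_def)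
  qed
  have R2: "rc 2 (\<lambda>xs. inA f (xs ! 0) (xs ! 1))"
    unfolding inA_def
    by (rule rc_sub[OF rc_const rc_sub[OF rc_const rc_c2[OF R1 rc_suc[OF rc_proj] rc_proj]], simplified]) auto
  have R3: "rc 2 (\<lambda>xs. cnt f (xs ! 1) (xs ! 0))"
  proof -
    have "rc 2 (\<lambda>xs. inA f (xs ! 1) (xs ! 0))"
      by (rule rc_c2[OF R2 rc_proj rc_proj, simplified]) auto
    from rc_sum2[OF this] show ?thesis
      by (rule rc_cong) (auto dest!: len2 simp: cnt_def)
  qed
  have R4: "rc 3 (\<lambda>xs. viol f w (xs ! 2) (xs ! 1) (xs ! 0))"
  proof -
    have W: "rc 3 (\<lambda>xs. w (xs ! 0))" by (rule rc_c1[OF hw rc_proj, simplified]) simp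
    have C: "rc 3 (\<lambda>xs. cnt f (xs ! 2) (xs ! 1))" by (rule rc_c2[OF R3 rc_proj rc_proj, simplified]) auto
    have P: "rc 3 (\<lambda>xs. 2 ^ (xs ! 0))" by (rule rc_pow[OF rc_proj]) simp
    have M: "rc 3 (\<lambda>xs. xs ! 1)" by (rule rc_proj) simp
    show ?thesis unfolding viol_def
      by (intro rc_mult rc_sub rc_const W M P C)
  qed
  have R5: "rc 3 (\<lambda>xs. \<Sum>k<xs ! 0. viol f w (xs ! 2) (xs ! 1) k)"
    using rc_sum3[OF R4] by (rule rc_cong) (auto dest!: len3)
  have R6: "rc 3 (\<lambda>xs. \<Sum>m<xs ! 0. \<Sum>k<Suc (xs ! 2). viol f w (xs ! 1) m k)"
  proof -
    have "rc 3 (\<lambda>xs. \<Sum>k<Suc (xs ! 2). viol f w (xs ! 1) (xs ! 0) k)"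
      using rc_c3[OF R5 rc_suc[OF p32] p30 p31]
      by (rule rc_cong) (auto dest!: len3)
    from rc_sum3[OF this] show ?thesis
      by (rule rc_cong) (auto dest!: len3)
  qed
  show ?thesis unfolding gfun_def
    using rc_c3[OF R6 rc_mult[OF rc_suc[OF p21] rc_pow[OF p21]] p20 p21]
    by (rule rc_cong) (auto dest!: len2)
qed

lemma inA_eq: "inA f s z = (if \<exists>y\<le>s. f [y, z] = 0 then 1 else 0)"
proof -
  have "(D f (Suc s) z = 0) \<longleftrightarrow> \<not>(\<exists>y\<le>s. f [y, z] = 0)"
    unfolding D_def by (auto simp: lessThan_Suc_atMost Suc_le_eq)
  then show ?thesis unfolding inA_def by auto
qed

lemma sum_ind_card: "(\<Sum>z<m. if P z then 1 else 0) = card {z. z < (m::nat) \<and> P z}"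
proof (induction m)
  case 0 then show ?case by simp
next
  case (Suc m)
  have e: "{z. z < Suc m \<and> P z} = (if P m then insert m {z. z < m \<and> P z} else {z. z < m \<and> P z})"
    by (auto simp: less_Suc_eq)
  show ?case using Suc by (simp add: e)
qed

lemma cnt_eq: "cnt f s m = card {z. z < m \<and> (\<exists>y\<le>s. f [y, z] = 0)}"
  unfolding cnt_def inA_eq by (rule sum_ind_card)

lemma viol_eq: "viol f w s m k = 0 \<longleftrightarrow> (w k \<le> m \<longrightarrow> 2^k * (m - cnt f s m) \<le> m)"
  unfolding viol_def by auto

lemma gfun_eq: "gfun f w s x = 0 \<longleftrightarrow>
   (\<forall>m<Suc x * 2^x. \<forall>k<Suc x. w k \<le> m \<longrightarrow> 2^k * (m - cnt f s m) \<le> m)"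
  unfolding gfun_def sum_eq_0_iff[OF finite_lessThan] viol_eq lessThan_iff by blast

lemma dens_nat: assumes "c \<le> m" "0 < m" "1 - 1 / 2 ^ k \<le> real c / real m"
  shows "2 ^ k * (m - c) \<le> (m::nat)"
proof -
  have "real m - real m / 2 ^ k \<le> real c"
    using assms(2,3) by (simp add: field_simps)
  then have "2 ^ k * (real m - real c) \<le> real m"
    by (simp add: field_simps)
  then have "real (2 ^ k * (m - c)) \<le> real m" using assms(1) by (simp add: of_nat_diff)
  then show ?thesis by linarith
qed

lemma dens_nat2: assumes "c \<le> m" "0 < m" "2 ^ k * (m - c) \<le> (m::nat)"
  shows "1 - 1 / 2 ^ k \<le> real c / real m"
proof -
  have "real (2 ^ k * (m - c)) \<le> real m" using assms(3) by linarith
  then have "2 ^ k * (real m - real c) \<le> real m" using assms(1) by (simp add: of_nat_diff)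
  then have "real m - real m / 2 ^ k \<le> real c" by (simp add: field_simps)
  then show ?thesis using assms(2) by (simp add: field_simps)
qed

lemma stage_ex: "\<exists>s. \<forall>z<(N::nat). (\<exists>y. f [y, z] = 0) \<longrightarrow> (\<exists>y\<le>s. f [y, z] = (0::nat))"
proof (induction N)
  case 0 then show ?case by simp
next
  case (Suc N)
  then obtain s where s: "\<forall>z<N. (\<exists>y. f [y, z] = 0) \<longrightarrow> (\<exists>y\<le>s. f [y, z] = 0)" by blast
  show ?case
  proof (cases "\<exists>y. f [y, N] = 0")
    case True
    then obtain y0 where y0: "f [y0, N] = 0" by blast
    show ?thesis
    proof (rule exI[of _ "max s y0"], intro allI impI)
      fix z assume "z < Suc N" "\<exists>y. f [y, z] = 0"
      then show "\<exists>y\<le>max s y0. f [y, z] = 0" using s y0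
        by (metis le_trans less_Suc_eq max.cobounded1 max.cobounded2)
    qed
  next
    case False
    then show ?thesis using s by (metis less_Suc_eq)
  qed
qed

lemma card_le_n: "card (S \<inter> {0..<n}) \<le> n"
  by (metis card_atLeastLessThan card_mono diff_zero finite_atLeastLessThan inf_le2)

lemma witness_density: assumes "density_one_witness w S" shows "has_density_one S"
  unfolding has_density_one_def
proof (rule LIMSEQ_I)
  fix r :: real assume r: "0 < r"
  obtain k where k: "(1/2::real) ^ k < r" using real_arch_pow_inv[OF r, of "1/2"] by auto
  show "\<exists>no. \<forall>n\<ge>no. norm (rho n S - 1) < r"
  proof (intro exI allI impI)
    fix n assume n: "max (w k) 1 \<le> n"
    then have "rho n S \<ge> 1 - 1 / 2 ^ k" using assms unfolding density_one_witness_def by auto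
    moreover have "rho n S \<le> 1" unfolding rho_def using card_le_n[of S n] n
      by (simp add: divide_le_eq_1)
    ultimately show "norm (rho n S - 1) < r" using k by (simp add: power_divide)
  qed
qed

lemma rc_fun1: "rc 1 F \<Longrightarrow> \<exists>g. recfn 1 g \<and> (\<forall>x. g [x] = F [x])"
  unfolding rc_def by auto

theorem mainTheorem11:
  fixes A :: "nat set"
  assumes "ce_set A" and "density_one_effectively A"
  shows "\<exists>B. B \<subseteq> A \<and> computable_set B \<and> density_one_effectively B"
proof -
  obtain f where hf0: "recfn 2 f" and Af: "\<forall>x. x \<in> A \<longleftrightarrow> (\<exists>y. f [y, x] = 0)"
    using assms(1) unfolding ce_set_def by blast
  obtain w where wc: "computable_fun w" and ww: "density_one_witness w A"
    using assms(2) unfolding density_one_effectively_def by blast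
  obtain fw where fw: "recfn 1 fw" "\<forall>k. w k = fw [k]"
    using wc unfolding computable_fun_def by blast
  have hf: "rc 2 f" by (rule recfn_rc[OF hf0])
  have hw: "rc 1 (\<lambda>xs. w (xs ! 0))"
    using recfn_rc[OF fw(1)] by (rule rc_cong) (auto dest!: len1' simp: fw(2))
  have tot: "\<forall>x. \<exists>s. gfun f w s x = 0"
  proof
    fix x
    obtain s where s: "\<forall>z<Suc x * 2^x. (\<exists>y. f [y, z] = 0) \<longrightarrow> (\<exists>y\<le>s. f [y, z] = 0)"
      using stage_ex by blast
    show "\<exists>s. gfun f w s x = 0"
    proof (rule exI[of _ s], unfold gfun_eq, intro allI impI)
      fix m k assume m: "m < Suc x * 2^x" and "k < Suc x" and wk: "w k \<le> m"
      have setq: "{z. z < m \<and> (\<exists>y\<le>s. f [y, z] = 0)} = A \<inter> {0..<m}"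
        using s m Af by auto
      then have cq: "cnt f s m = card (A \<inter> {0..<m})" by (simp add: cnt_eq)
      show "2^k * (m - cnt f s m) \<le> m"
      proof (cases "m = 0")
        case True thus ?thesis by simp
      next
        case False
        hence "1 - 1/2^k \<le> rho m A" using ww wk unfolding density_one_witness_def by auto
        thus ?thesis unfolding cq using dens_nat[OF card_le_n[of A m], of k] False by (simp add: rho_def)
      qed
    qed
  qed
  have gs: "\<And>x. gfun f w (sig f w x) x = 0"
    unfolding sig_def using tot by (metis (mono_tags, lifting) LeastI_ex)
  have mono: "\<And>x x'. x' \<le> x \<Longrightarrow> sig f w x' \<le> sig f w x"
  proof -
    fix x x' :: nat assume xx: "x' \<le> x"
    have b: "Suc x' * 2^x' \<le> Suc x * 2^x"
      using xx by (intro mult_le_mono) (auto intro: power_increasing)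
    have "gfun f w (sig f w x) x' = 0"
      using gs[of x] xx b unfolding gfun_eq
      by (meson Suc_le_mono less_le_trans)
    then show "sig f w x' \<le> sig f w x" unfolding sig_def[of f w x'] by (rule Least_le)
  qed
  define B where "B = {x. \<exists>y\<le>sig f w x. f [y, x] = 0}"
  have BA: "B \<subseteq> A" unfolding B_def using Af by auto
  have sigrc: "rc 1 (\<lambda>xs. sig f w (xs ! 0))"
  proof -
    have G: "rc (Suc (Suc 0)) (\<lambda>xs. gfun f w (xs ! 0) (xs ! 1))"
      using rc_gfun[OF hf hw] by (simp add: numeral_2_eq_2)
    have "rc (Suc 0) (\<lambda>xs. LEAST y. (\<lambda>xs. gfun f w (xs ! 0) (xs ! 1)) (y # xs) = 0)"
      by (rule rc_mu[OF G]) (use tot in simp)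
    then have "rc 1 (\<lambda>xs. LEAST y. gfun f w ((y # xs) ! 0) ((y # xs) ! 1) = 0)" by simp
    then show ?thesis by (rule rc_cong) (auto dest!: len1' simp: sig_def)
  qed
  have chirc: "rc 1 (\<lambda>xs. 1 - inA f (sig f w (xs ! 0)) (xs ! 0))"
    using rc_sub[OF rc_const rc_c2[OF rc_inA[OF hf] sigrc p10]] by (rule rc_cong) auto
  have compB: "computable_set B"
  proof -
    obtain g where g: "recfn 1 g" "\<forall>x. g [x] = 1 - inA f (sig f w x) x"
      using rc_fun1[OF chirc] by auto
    show ?thesis unfolding computable_set_def
      using g(1) by (intro exI[of _ g]) (auto simp: g(2) inA_eq B_def)
  qed
  define wB where "wB k = w (Suc k) + Suc k * 2 ^ Suc k + 1" for k
  have wBc: "computable_fun wB"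
  proof -
    have "rc 1 (\<lambda>xs. w (Suc (xs ! 0)) + Suc (xs ! 0) * 2 ^ Suc (xs ! 0) + 1)"
      by (intro rc_add rc_mult rc_pow rc_suc p10 rc_const rc_c1[OF hw, simplified])
    then obtain g where g: "recfn 1 g" "\<forall>x. g [x] = wB x"
      using rc_fun1 unfolding wB_def by force
    then show ?thesis unfolding computable_fun_def by auto
  qed
  have wit: "density_one_witness wB B"
    unfolding density_one_witness_def
  proof (intro allI impI)
    fix k n :: nat assume n0: "0 < n" and nk: "wB k \<le> n"
    define K where "K = Suc k"
    define h where "h = n div 2 ^ K"
    define s where "s = sig f w h"
    have KK: "K * 2 ^ K \<le> n" using nk unfolding wB_def K_def by simp
    have hK: "K \<le> h"
    proof -
      have "K * 2 ^ K div 2 ^ K \<le> n div 2 ^ K" using KK by (rule div_le_mono)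
      then show ?thesis unfolding h_def by simp
    qed
    have hn: "n < Suc h * 2 ^ h"
    proof -
      have e1: "n = h * 2 ^ K + n mod 2 ^ K" unfolding h_def by (metis div_mult_mod_eq)
      have e2: "n mod 2 ^ K < 2 ^ K" by simp
      have e3: "Suc h * 2 ^ K = 2 ^ K + h * 2 ^ K" by simp
      have "n < Suc h * 2 ^ K" using e1 e2 e3 by linarith
      also have "\<dots> \<le> Suc h * 2 ^ h" using hK by (intro mult_le_mono2 power_increasing) auto
      finally show ?thesis .
    qed
    have wK: "w K \<le> n" using nk unfolding wB_def K_def by simp
    have main: "2 ^ K * (n - cnt f s n) \<le> n"
      using gs[of h] hn hK wK unfolding gfun_eq s_def by auto
    let ?P = "\<lambda>z. \<exists>y\<le>s. f [y, z] = 0"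
    have sub: "{z. z < n \<and> ?P z} \<subseteq> {..<h} \<union> (B \<inter> {0..<n})"
    proof
      fix z assume z: "z \<in> {z. z < n \<and> ?P z}"
      show "z \<in> {..<h} \<union> (B \<inter> {0..<n})"
      proof (cases "z < h")
        case False
        then have "s \<le> sig f w z" unfolding s_def by (intro mono) simp
        then show ?thesis using z unfolding B_def by (auto intro: le_trans)
      qed simp
    qed
    have "cnt f s n \<le> card ({..<h} \<union> (B \<inter> {0..<n}))"
      unfolding cnt_eq by (rule card_mono[OF _ sub]) simp
    also have "\<dots> \<le> h + card (B \<inter> {0..<n})"
      using card_Un_le[of "{..<h}" "B \<inter> {0..<n}"] by simp
    finally have c1: "cnt f s n \<le> h + card (B \<inter> {0..<n})" .
    have hh: "2 ^ K * h \<le> n" unfolding h_def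
      using div_times_less_eq_dividend[of n "2 ^ K"] by (simp add: mult.commute)
    have "n - card (B \<inter> {0..<n}) \<le> (n - cnt f s n) + h" using c1 by linarith
    then have "2 ^ K * (n - card (B \<inter> {0..<n})) \<le> 2 ^ K * (n - cnt f s n) + 2 ^ K * h"
      by (metis add_mult_distrib2 mult_le_mono2)
    also have "\<dots> \<le> 2 * n" using main hh by simp
    finally have "2 * (2 ^ k * (n - card (B \<inter> {0..<n}))) \<le> 2 * n" unfolding K_def by simp
    then have "2 ^ k * (n - card (B \<inter> {0..<n})) \<le> n" by simp
    then show "1 - 1 / 2 ^ k \<le> rho n B"
      unfolding rho_def using dens_nat2[OF card_le_n[of B n] n0] by simp
  qed
  show ?thesis
    using BA compB wBc wit witness_density[OF wit]
    unfolding density_one_effectively_def by blast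
qed

end
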